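(* Let $G$ be a finite solvable group having exactly one normal subgroup other than $1$ and $G$. Then $G$ is not $\psi$-normal divisible.
   Context: For a finite group $G$, $\psi(G)=\sum_{x\in G} o(x)$ denotes the sum of the orders of all elements of $G$. A finite group $G$ is called $\psi$-normal divisible if $\psi(H)$ divides $\psi(G)$ for every normal subgroup $H$ of $G$. *)

theory Defs
  imports "HOL-Algebra.Multiplicative_Group" "HOL-Algebra.Solvable_Groups"
begin

definition psi :: "('a, 'b) monoid_scheme \<Rightarrow> nat" where
  "psi G = (\<Sum>x\<in>carrier G. group.ord G x)"

definition psi_normal_divisible :: "('a, 'b) monoid_scheme \<Rightarrow> bool" where
  "psi_normal_divisible G \<longleftrightarrow>
     (\<forall>H. H \<lhd> G \<longrightarrow> psi (G\<lparr>carrier := H\<rparr>) dvd psi G)"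

end

theory Submission imports Defs "HOL-Algebra.Sylow" begin

lemma cop1: "coprime (1 + q*m) (q::nat)"
proof (rule coprimeI)
  fix c assume "c dvd 1 + q*m" "c dvd q"
  hence "c dvd q*m" by simp
  have "c dvd 1" by (rule dvd_add_left_iff[OF \<open>c dvd q*m\<close>, THEN iffD1, OF \<open>c dvd 1 + q*m\<close>])
  thus "is_unit c" by simp
qed

lemma arithA:
  fixes p :: nat assumes p: "prime p"
  shows "\<not> (1 + p*(p-1)) dvd (1 + p*(p-1)) + (p*p - p)*(p*p)"
proof
  let ?P = "1 + p*(p-1)"
  assume "?P dvd ?P + (p*p - p)*(p*p)"
  hence d0: "?P dvd (p*p - p)*(p*p)" by (rule dvd_add_right_iff[OF dvd_refl, THEN iffD1])
  have e: "p*p - p = p*(p-1)" by (simp add: diff_mult_distrib2)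
  have "(p*p - p)*(p*p) = (p - 1) * (p*p*p)" unfolding e by (simp add: ac_simps)
  with d0 have d: "?P dvd (p - 1) * (p*p*p)" by simp
  have "coprime ?P p"
  proof -
    have "coprime (1 + p*(p-1)) p" by (rule cop1)
    thus ?thesis .
  qed
  hence "coprime ?P (p*p*p)" by simp
  hence "?P dvd p - 1" using d by (simp add: coprime_dvd_mult_left_iff)
  moreover have "p \<ge> 2" using p prime_ge_2_nat by blast
  ultimately have "?P \<le> p - 1" by (simp add: dvd_imp_le)
  moreover have "p*(p-1) \<ge> p - 1" using \<open>p \<ge> 2\<close> by simp
  hence "p - 1 < ?P" by linarith
  ultimately show False by simp
qed

lemma arithB:
  fixes p n q :: nat
  assumes p: "prime p" and n: "n \<ge> 2" and q: "q \<ge> 2" and qd: "q dvd n - 1"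
    and cop: "coprime (1 + p*(n-1)) n"
  shows "\<not> (1 + p*(n-1)) dvd (1 + p*(n-1)) + (n*q - n)*q"
proof
  let ?P = "1 + p*(n-1)"
  assume "?P dvd ?P + (n*q - n)*q"
  hence d0: "?P dvd (n*q - n)*q" by (rule dvd_add_right_iff[OF dvd_refl, THEN iffD1])
  have e: "n*q - n = n*(q-1)" by (simp add: diff_mult_distrib2)
  have "(n*q - n)*q = n * ((q - 1) * q)" unfolding e by (simp add: ac_simps)
  with d0 have "?P dvd n * ((q - 1) * q)" by simp
  hence d: "?P dvd (q - 1) * q" using cop by (simp add: coprime_dvd_mult_right_iff)
  obtain k where k: "n - 1 = q * k" using qd by blast
  have "coprime ?P q"
  proof -
    have e: "?P = 1 + q * (p * k)" unfolding k by (simp add: ac_simps)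
    show ?thesis unfolding e by (rule cop1)
  qed
  hence "?P dvd q - 1" using d by (simp add: coprime_dvd_mult_left_iff)
  moreover have "q - 1 > 0" using q by simp
  ultimately have "?P \<le> q - 1" by (simp add: dvd_imp_le)
  moreover have "k \<ge> 1" using k n by (cases k) auto
  hence "n - 1 \<ge> q" using k by simp
  moreover have "p \<ge> 1" using p prime_ge_1_nat by blast
  hence "p * (n-1) \<ge> n - 1" by simp
  ultimately show False by linarith
qed

context group begin

lemma ord_consistent:
  assumes "subgroup H G" "h \<in> H"
  shows "group.ord (G\<lparr>carrier := H\<rparr>) h = ord h"
proof -
  interpret GH: group "G\<lparr>carrier := H\<rparr>" using subgroup_imp_group[OF assms(1)] .
  have hc: "h \<in> carrier G" by (rule subgroup.mem_carrier[OF assms(1,2)])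
  have "h [^]\<^bsub>G\<lparr>carrier:=H\<rparr>\<^esub> n = \<one>\<^bsub>G\<lparr>carrier:=H\<rparr>\<^esub> \<longleftrightarrow> ord h dvd n" for n :: nat
    using pow_eq_id[OF hc, of n] nat_pow_consistent[of h n H] by simp
  then show ?thesis using GH.ord_unique[of h "ord h"] assms(2) by simp
qed

lemma ord_dvd_card_sub:
  assumes "finite (carrier G)" "subgroup H G" "h \<in> H"
  shows "ord h dvd card H"
proof -
  interpret GH: group "G\<lparr>carrier := H\<rparr>" using subgroup_imp_group[OF assms(2)] .
  have "GH.ord h dvd order (G\<lparr>carrier := H\<rparr>)"
    using GH.ord_dvd_group_order[of h] assms(3) by simp
  thus ?thesis using ord_consistent[OF assms(2,3)] by (simp add: order_def)
qed

lemma finite_subgroupI: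
  assumes fin: "finite (carrier G)" and sub: "H \<subseteq> carrier G" and one: "\<one> \<in> H"
    and mult: "\<And>a b. a \<in> H \<Longrightarrow> b \<in> H \<Longrightarrow> a \<otimes> b \<in> H"
  shows "subgroup H G"
proof (rule subgroupI[OF sub])
  show "H \<noteq> {}" using one by blast
next
  fix a assume a: "a \<in> H"
  have ac: "a \<in> carrier G" using a sub by blast
  have pw: "a [^] (k::nat) \<in> H" for k
    by (induction k) (use one a mult in auto)
  have o: "ord a \<ge> 1" using ord_ge_1[OF fin ac] .
  have "a [^] (ord a - 1) \<otimes> a = \<one>"
    using o ac by (metis Suc_diff_le diff_Suc_1 nat_pow_Suc pow_ord_eq_1)
  hence "inv a = a [^] (ord a - 1)"
    using ac by (metis inv_char l_inv_ex nat_pow_closed inv_equality)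
  thus "inv a \<in> H" using pw by simp
next
  fix a b assume "a \<in> H" "b \<in> H" thus "a \<otimes> b \<in> H" by (rule mult)
qed

lemma conj_pow:
  assumes "g \<in> carrier G" "v \<in> carrier G"
  shows "(g \<otimes> v \<otimes> inv g) [^] (k::nat) = g \<otimes> v [^] k \<otimes> inv g"
proof (induction k)
  case 0 thus ?case using assms by simp
next
  case (Suc k)
  have "(g \<otimes> v \<otimes> inv g) [^] Suc k = (g \<otimes> v [^] k \<otimes> inv g) \<otimes> (g \<otimes> v \<otimes> inv g)"
    using Suc by simp
  also have "\<dots> = g \<otimes> (v [^] k \<otimes> v) \<otimes> inv g"
    using assms by (simp add: m_assoc, metis assms inv_closed l_inv l_one m_assoc m_closed)
  finally show ?case by simp
qed


lemma orbit_dvd: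
  assumes N: "N \<lhd> G" and fin: "finite (carrier G)" and x: "x \<in> carrier G"
    and xq: "x [^] q = \<one>" and q: "q > 0"
    and fpf: "\<And>i u. 0 < i \<Longrightarrow> i < q \<Longrightarrow> u \<in> N \<Longrightarrow> u \<otimes> x [^] i = x [^] i \<otimes> u \<Longrightarrow> u = \<one>"
  shows "q dvd card (N - {\<one>})"
proof -
  define A where "A = N - {\<one>}"
  define c where "c = (\<lambda>(i::nat) u. x [^] i \<otimes> u \<otimes> inv (x [^] i))"
  have Nc: "N \<subseteq> carrier G" using subgroup.subset[OF normal_imp_subgroup[OF N]] .
  have Ac: "A \<subseteq> carrier G" using Nc A_def by blast
  have c_add: "c i (c j u) = c (i + j) u" if "u \<in> carrier G" for i j u
  proof -
    have "c i (c j u) = (x [^] i \<otimes> x [^] j) \<otimes> u \<otimes> (inv (x [^] j) \<otimes> inv (x [^] i))"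
      unfolding c_def using that x by (simp add: m_assoc)
    also have "\<dots> = c (i + j) u"
      unfolding c_def using that x by (simp add: inv_mult_group flip: nat_pow_mult)
    finally show ?thesis .
  qed
  have xmod: "x [^] i = x [^] (i mod q)" for i
  proof -
    have "x [^] i = x [^] (q * (i div q) + i mod q)" by simp
    also have "\<dots> = (x [^] q) [^] (i div q) \<otimes> x [^] (i mod q)"
      using x by (simp add: nat_pow_mult nat_pow_pow)
    finally show ?thesis using xq x by simp
  qed
  have c_mod: "c i u = c (i mod q) u" for i u unfolding c_def using xmod[of i] by simp
  have c0: "c 0 u = u" if "u \<in> carrier G" for u unfolding c_def using that by simp
  have c_in: "c i u \<in> A" if "u \<in> A" for i u
  proof -
    have uc: "u \<in> carrier G" using that Ac by blast
    have "c i u \<in> N" unfolding c_def using that A_def normal.inv_op_closed2[OF N] x by auto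
    moreover have "c i u \<noteq> \<one>"
    proof
      assume "c i u = \<one>"
      hence "x [^] i \<otimes> u = x [^] i" unfolding c_def using uc x
        by (metis inv_closed l_one m_closed nat_pow_closed r_one inv_solve_right)
      hence "u = \<one>" using uc x by simp
      thus False using that A_def by blast
    qed
    ultimately show ?thesis using A_def by blast
  qed
  have c_fix: "c d w = w \<Longrightarrow> 0 < d \<Longrightarrow> d < q \<Longrightarrow> w \<in> A \<Longrightarrow> False" for d w
  proof -
    assume h: "c d w = w" "0 < d" "d < q" "w \<in> A"
    have wc: "w \<in> carrier G" using h(4) Ac by blast
    have "x [^] d \<otimes> w = w \<otimes> x [^] d"
      using h(1) wc x unfolding c_def
      by (metis inv_closed m_closed nat_pow_closed inv_solve_right)
    hence "w = \<one>" using fpf[OF h(2,3)] h(4) A_def by auto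
    thus False using h(4) A_def by blast
  qed
  define r where "r = {(u, c i u) | u i. u \<in> A}"
  have eq: "equiv A r"
  proof (rule equivI)
    show "refl_on A r"
    proof (rule refl_onI)
      fix a assume a: "a \<in> A"
      hence "c 0 a = a" using c0 Ac by blast
      moreover have "(a, c 0 a) \<in> r" unfolding r_def using a by blast
      ultimately show "(a, a) \<in> r" by simp
    qed
    show "sym r"
    proof (rule symI)
      fix a b assume "(a, b) \<in> r"
      then obtain u i where ab: "a = u" "b = c i u" and u: "u \<in> A" unfolding r_def by blast
      have uc: "u \<in> carrier G" using u Ac by blast
      have "c (q - i mod q) (c i u) = c (q - i mod q + i) u" using c_add uc by simp
      also have "\<dots> = c ((q - i mod q + i) mod q) u" by (rule c_mod)
      also have "(q - i mod q + i) mod q = 0"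
      proof -
        have "q - i mod q + i = q * (1 + i div q)"
        proof -
          have a: "i mod q < q" using q by simp
          have b: "i mod q \<le> i" by simp
          have "q - i mod q + i = q + (i - i mod q)" using a b by arith
          also have "i - i mod q = q * (i div q)" by (simp add: minus_mod_eq_mult_div)
          finally show ?thesis by (simp add: algebra_simps)
        qed
        thus ?thesis by simp
      qed
      finally have "c (q - i mod q) (c i u) = u" using c0 uc by simp
      moreover have "(c i u, c (q - i mod q) (c i u)) \<in> r" unfolding r_def using c_in[OF u] by blast
      ultimately show "(b, a) \<in> r" using ab by simp
    qed
    show "trans r"
    proof (rule transI)
      fix a b d assume "(a, b) \<in> r" "(b, d) \<in> r"
      then obtain u i j where ab: "a = u" "b = c i u" "d = c j (c i u)" and u: "u \<in> A"
        unfolding r_def by blast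
      have uc: "u \<in> carrier G" using u Ac by blast
      have "(u, c (j + i) u) \<in> r" unfolding r_def using u by blast
      thus "(a, d) \<in> r" using ab c_add[OF uc, of j i] by simp
    qed
    show "r \<subseteq> A \<times> A" unfolding r_def using c_in by blast
  qed
  have "q dvd card A"
  proof (rule equiv_imp_dvd_card[OF _ eq])
    show "finite A" using fin Ac finite_subset by blast
    fix X assume "X \<in> A // r"
    then obtain u where u: "u \<in> A" and X: "X = r `` {u}" by (meson quotientE)
    have uc: "u \<in> carrier G" using u Ac by blast
    have "X = (\<lambda>i. c i u) ` {..<q}"
    proof
      show "X \<subseteq> (\<lambda>i. c i u) ` {..<q}"
      proof
        fix y assume "y \<in> X"
        then obtain i where "y = c i u" unfolding X r_def by blast
        hence "y = c (i mod q) u" using c_mod[of i u] by simp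
        moreover have "i mod q \<in> {..<q}" using q by simp
        ultimately show "y \<in> (\<lambda>i. c i u) ` {..<q}" by blast
      qed
      show "(\<lambda>i. c i u) ` {..<q} \<subseteq> X"
        unfolding X r_def using u by blast
    qed
    moreover have "inj_on (\<lambda>i. c i u) {..<q}"
    proof (rule inj_onI, rule ccontr)
      fix i j assume ij: "i \<in> {..<q}" "j \<in> {..<q}" "c i u = c j u" "i \<noteq> j"
      show False
      proof (cases "i < j")
        case True
        have "c (j - i) (c i u) = c (j - i + i) u" by (rule c_add[OF uc])
        hence "c (j - i) (c i u) = c i u" using ij(3) True by simp
        moreover have "0 < j - i" "j - i < q" using True ij by auto
        ultimately show False using c_fix c_in[OF u] by blast
      next
        case False
        hence "j < i" using ij(4) by simp
        have "c (i - j) (c j u) = c (i - j + j) u" by (rule c_add[OF uc])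
        hence "c (i - j) (c j u) = c j u" using ij(3) \<open>j < i\<close> by simp
        moreover have "0 < i - j" "i - j < q" using \<open>j < i\<close> ij by auto
        ultimately show False using c_fix c_in[OF u] by blast
      qed
    qed
    ultimately show "q dvd card X" by (simp add: card_image)
  qed
  thus ?thesis using A_def by simp
qed

lemma pow_mod_ord:
  assumes x: "x \<in> carrier G"
  shows "x [^] (k::nat) = x [^] (k mod ord x)"
proof -
  have "x [^] k = x [^] (ord x * (k div ord x) + k mod ord x)" by simp
  also have "\<dots> = (x [^] ord x) [^] (k div ord x) \<otimes> x [^] (k mod ord x)"
    using x by (simp only: nat_pow_mult nat_pow_pow)
  also have "\<dots> = x [^] (k mod ord x)"
    using x by (simp only: pow_ord_eq_1[OF x] nat_pow_one l_one nat_pow_closed)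
  finally show ?thesis .
qed

lemma comm_of_commutator:
  assumes a: "a \<in> carrier G" and b: "b \<in> carrier G" and e: "a \<otimes> b \<otimes> inv a \<otimes> inv b = \<one>"
  shows "a \<otimes> b = b \<otimes> a"
proof -
  have y: "a \<otimes> b \<otimes> inv a \<in> carrier G" using a b by simp
  have "a \<otimes> b \<otimes> inv a = (a \<otimes> b \<otimes> inv a) \<otimes> (inv b \<otimes> b)" using y b by simp
  also have "\<dots> = (a \<otimes> b \<otimes> inv a \<otimes> inv b) \<otimes> b" using y b by (simp add: m_assoc)
  also have "\<dots> = b" using e b by simp
  finally have "a \<otimes> b \<otimes> inv a = b" .
  hence "a \<otimes> b \<otimes> inv a \<otimes> a = b \<otimes> a" by simp
  thus ?thesis using a b by (simp add: m_assoc)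
qed

lemma cauchy_sub:
  assumes fin: "finite (carrier G)" and H: "subgroup H G" and r: "prime r" and rd: "r dvd card H"
  shows "\<exists>h\<in>H. ord h = r"
proof -
  interpret GH: group "G\<lparr>carrier := H\<rparr>" using subgroup_imp_group[OF H] .
  have finH: "finite H" using finite_subset[OF subgroup.subset[OF H] fin] .
  have "order (G\<lparr>carrier := H\<rparr>) = r ^ 1 * (card H div r)" using rd by (simp add: order_def)
  from sylow_thm[OF r GH.is_group this] finH
  obtain K where K: "subgroup K (G\<lparr>carrier := H\<rparr>)" and cK: "card K = r ^ 1"
    by auto
  have KG: "subgroup K G" by (rule incl_subgroup[OF H K])
  have KH: "K \<subseteq> H" using subgroup.subset[OF K] by simp
  have "K \<noteq> {\<one>}"
  proof
    assume "K = {\<one>}"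
    hence "card K = 1" by simp
    thus False using cK prime_gt_1_nat[OF r] by simp
  qed
  moreover have "\<one> \<in> K" using subgroup.one_closed[OF KG] .
  ultimately obtain k where k: "k \<in> K" "k \<noteq> \<one>" by blast
  have kc: "k \<in> carrier G" by (rule subgroup.mem_carrier[OF KG k(1)])
  have "ord k dvd r" using ord_dvd_card_sub[OF fin KG k(1)] cK by simp
  moreover have "ord k \<noteq> 1" using ord_eq_1[OF kc] k(2) by simp
  ultimately have "ord k = r" using r unfolding prime_nat_iff by blast
  thus ?thesis using k KH by blast
qed

lemma comm_inv:
  assumes g: "g \<in> carrier G" and x: "x \<in> carrier G" and e: "g \<otimes> x = x \<otimes> g"
  shows "inv g \<otimes> x = x \<otimes> inv g"
proof -
  have "inv g \<otimes> x = inv g \<otimes> x \<otimes> (g \<otimes> inv g)" using g x by simp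
  also have "\<dots> = inv g \<otimes> (g \<otimes> x) \<otimes> inv g" using g x by (simp add: m_assoc e)
  also have "\<dots> = x \<otimes> inv g" using g x by (simp add: m_assoc[symmetric])
  finally show ?thesis .
qed

lemma cen_subgroup:
  assumes x: "x \<in> carrier G"
  shows "subgroup {g \<in> carrier G. g \<otimes> x = x \<otimes> g} G"
proof (rule subgroupI)
  show "{g \<in> carrier G. g \<otimes> x = x \<otimes> g} \<subseteq> carrier G" by blast
  have "\<one> \<in> {g \<in> carrier G. g \<otimes> x = x \<otimes> g}" using x by simp
  thus "{g \<in> carrier G. g \<otimes> x = x \<otimes> g} \<noteq> {}" by blast
  fix a assume "a \<in> {g \<in> carrier G. g \<otimes> x = x \<otimes> g}"
  thus "inv a \<in> {g \<in> carrier G. g \<otimes> x = x \<otimes> g}" using comm_inv[OF _ x] by simp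
next
  fix a b assume a: "a \<in> {g \<in> carrier G. g \<otimes> x = x \<otimes> g}" and b: "b \<in> {g \<in> carrier G. g \<otimes> x = x \<otimes> g}"
  have ac: "a \<in> carrier G" and ea: "a \<otimes> x = x \<otimes> a" using a by auto
  have bc: "b \<in> carrier G" and eb: "b \<otimes> x = x \<otimes> b" using b by auto
  have "a \<otimes> b \<otimes> x = a \<otimes> (b \<otimes> x)" using ac bc x by (simp add: m_assoc)
  also have "\<dots> = (a \<otimes> x) \<otimes> b" using ac bc x eb by (simp add: m_assoc)
  also have "\<dots> = x \<otimes> (a \<otimes> b)" using ac bc x ea by (simp add: m_assoc)
  finally show "a \<otimes> b \<in> {g \<in> carrier G. g \<otimes> x = x \<otimes> g}" using ac bc by simp
qed

lemma center_normal:
  "{z \<in> carrier G. \<forall>g\<in>carrier G. z \<otimes> g = g \<otimes> z} \<lhd> G"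
proof -
  let ?Z = "{z \<in> carrier G. \<forall>g\<in>carrier G. z \<otimes> g = g \<otimes> z}"
  have sg: "subgroup ?Z G"
  proof (rule subgroupI)
    show "?Z \<subseteq> carrier G" by blast
    have "\<one> \<in> ?Z" by simp
    thus "?Z \<noteq> {}" by blast
    fix a assume "a \<in> ?Z"
    hence ac: "a \<in> carrier G" and ea: "\<And>g. g \<in> carrier G \<Longrightarrow> a \<otimes> g = g \<otimes> a" by auto
    have "inv a \<otimes> g = g \<otimes> inv a" if "g \<in> carrier G" for g using comm_inv[OF ac that ea[OF that]] .
    thus "inv a \<in> ?Z" using ac by simp
  next
    fix a b assume "a \<in> ?Z" "b \<in> ?Z"
    hence ac: "a \<in> carrier G" and ea: "\<And>g. g \<in> carrier G \<Longrightarrow> a \<otimes> g = g \<otimes> a"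
      and bc: "b \<in> carrier G" and eb: "\<And>g. g \<in> carrier G \<Longrightarrow> b \<otimes> g = g \<otimes> b" by auto
    have "a \<otimes> b \<otimes> g = g \<otimes> (a \<otimes> b)" if g: "g \<in> carrier G" for g
    proof -
      have "a \<otimes> b \<otimes> g = a \<otimes> (g \<otimes> b)" using ac bc g eb[OF g] by (simp add: m_assoc)
      also have "\<dots> = (a \<otimes> g) \<otimes> b" using ac bc g by (simp add: m_assoc)
      also have "\<dots> = g \<otimes> (a \<otimes> b)" using ac bc g ea[OF g] by (simp add: m_assoc)
      finally show ?thesis .
    qed
    thus "a \<otimes> b \<in> ?Z" using ac bc by simp
  qed
  show ?thesis unfolding normal_inv_iff
  proof (intro conjI sg ballI)
    fix g z assume g: "g \<in> carrier G" and z: "z \<in> ?Z"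
    hence zc: "z \<in> carrier G" and ez: "z \<otimes> g = g \<otimes> z" by auto
    have "g \<otimes> z \<otimes> inv g = z" using g zc ez[symmetric] by (simp add: m_assoc)
    thus "g \<otimes> z \<otimes> inv g \<in> ?Z" using z by simp
  qed
qed

lemma subgroup_nat_pow:
  assumes "subgroup H G" "h \<in> H" shows "h [^] (k::nat) \<in> H"
proof (induction k)
  case 0 thus ?case using subgroup.one_closed[OF assms(1)] by simp
next
  case (Suc k) thus ?case using subgroup.m_closed[OF assms(1) Suc assms(2)] by simp
qed

lemma mid_conj:
  assumes "a \<in> carrier G" "b \<in> carrier G" "c \<in> carrier G" "d \<in> carrier G"
  shows "(a \<otimes> b) \<otimes> (c \<otimes> d) = (a \<otimes> (b \<otimes> c \<otimes> inv b)) \<otimes> (b \<otimes> d)"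
  using assms by (simp add: m_assoc, simp add: m_assoc[symmetric])

lemma conj_mult2:
  assumes "g \<in> carrier G" "h \<in> carrier G" "c \<in> carrier G"
  shows "(g \<otimes> h) \<otimes> c \<otimes> inv (g \<otimes> h) = g \<otimes> (h \<otimes> c \<otimes> inv h) \<otimes> inv g"
  using assms by (simp add: m_assoc inv_mult_group)

lemma main:
  assumes fin: "finite (carrier G)" and sol: "solvable G"
    and N: "N \<lhd> G" and N1: "N \<noteq> {\<one>}" and NG: "N \<noteq> carrier G"
    and uniq: "\<And>K. K \<lhd> G \<Longrightarrow> K \<noteq> {\<one>} \<Longrightarrow> K \<noteq> carrier G \<Longrightarrow> K = N"
  shows "\<not> psi (G\<lparr>carrier := N\<rparr>) dvd psi G"
proof -
  have Nsub: "subgroup N G" using normal_imp_subgroup[OF N] .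
  have Nc: "N \<subseteq> carrier G" using subgroup.subset[OF Nsub] .
  have Ncar: "u \<in> carrier G" if "u \<in> N" for u using subsetD[OF Nc that] .
  have one_N: "\<one> \<in> N" using subgroup.one_closed[OF Nsub] .
  have finN: "finite N" using finite_subset[OF Nc fin] .
  define n where "n = card N"
  obtain u0 where u0: "u0 \<in> N" "u0 \<noteq> \<one>" using N1 one_N by blast
  have n2: "n \<ge> 2"
  proof -
    have "{\<one>, u0} \<subseteq> N" using u0 one_N by blast
    hence "card {\<one>, u0} \<le> n" unfolding n_def using finN card_mono by blast
    thus ?thesis using u0 by simp
  qed
  have uniq': "K = N" if K: "K \<lhd> G" "K \<subseteq> N" "K \<noteq> {\<one>}" for K
  proof -
    have "K \<noteq> carrier G" using K(2) NG Nc by blast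
    thus ?thesis using uniq K by blast
  qed
  have uniqG: "H = carrier G" if H: "subgroup H G" "H \<lhd> G" "z \<in> H" "z \<notin> N" for H z
  proof (rule ccontr)
    assume "H \<noteq> carrier G"
    moreover have "H \<noteq> {\<one>}" using H one_N by auto
    ultimately have "H = N" using uniq H(2) by blast
    thus False using H by blast
  qed
  obtain m0 where m0: "(derived G ^^ m0) (carrier G) = {\<one>}"
    using sol unfolding solvable_iff_trivial_derived_seq by blast
  have fixpt: "(derived G ^^ k) H = H" if "derived G H = H" for H k
    using that by (induction k) simp_all
  have triv_of_fix: "H \<subseteq> {\<one>}" if "H \<subseteq> carrier G" "derived G H = H" for H
  proof -
    have "(derived G ^^ m0) H \<subseteq> (derived G ^^ m0) (carrier G)" by (rule mono_exp_of_derived[OF that(1)])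
    thus ?thesis using fixpt[OF that(2)] m0 by simp
  qed
  have carrier_normal: "carrier G \<lhd> G"
    unfolding normal_inv_iff using subgroup_self by simp
  have D_normal: "derived G (carrier G) \<lhd> G" by (rule derived_is_normal[OF carrier_normal])
  have D_ne: "derived G (carrier G) \<noteq> carrier G"
  proof
    assume "derived G (carrier G) = carrier G"
    hence "carrier G \<subseteq> {\<one>}" using triv_of_fix by blast
    hence "N \<subseteq> {\<one>}" using Nc by blast
    thus False using N1 one_N by blast
  qed
  have comm_of_D: "a \<otimes> b \<otimes> inv a \<otimes> inv b \<in> derived G H" if "a \<in> H" "b \<in> H" for a b H
    unfolding derived_def by (rule generate.incl) (use that in blast)
  have D_cases: "derived G (carrier G) = {\<one>} \<or> derived G (carrier G) = N"
    using uniq[OF D_normal] D_ne by blast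
  have Nab: "a \<otimes> b = b \<otimes> a" if ab: "a \<in> N" "b \<in> N" for a b
  proof (cases "derived G (carrier G) = {\<one>}")
    case True
    have "a \<otimes> b \<otimes> inv a \<otimes> inv b = \<one>" using comm_of_D[of a "carrier G" b] True Ncar ab by simp
    thus ?thesis using comm_of_commutator Ncar ab by blast
  next
    case False
    hence DN: "derived G (carrier G) = N" using D_cases by blast
    have D2n: "derived G N \<lhd> G" by (rule derived_is_normal[OF N])
    have D2s: "derived G N \<subseteq> N" by (rule derived_incl[OF subset_refl Nsub])
    have D2ne: "derived G N \<noteq> N"
    proof
      assume "derived G N = N"
      hence "N \<subseteq> {\<one>}" using triv_of_fix Nc by blast
      thus False using N1 one_N by blast
    qed
    have "derived G N = {\<one>}" using uniq'[OF D2n D2s] D2ne by blast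
    hence "a \<otimes> b \<otimes> inv a \<otimes> inv b = \<one>" using comm_of_D[of a N b] ab by simp
    thus ?thesis using comm_of_commutator Ncar ab by blast
  qed
  have u0c: "u0 \<in> carrier G" using Ncar u0(1) .
  have o0: "ord u0 \<noteq> 1" using ord_eq_1[OF u0c] u0(2) by simp
  obtain p where p: "prime p" and pd: "p dvd ord u0" using prime_factor_nat[OF o0] by blast
  obtain t where t: "ord u0 = p * t" using pd by blast
  have o0pos: "ord u0 \<ge> 1" using ord_ge_1[OF fin u0c] .
  have t0: "t \<noteq> 0" using t o0pos by auto
  define w where "w = u0 [^] t"
  have ow: "ord w = p"
  proof -
    have "ord w = ord u0 div t" unfolding w_def by (rule ord_pow[OF u0c _ t0]) (simp add: t)
    thus ?thesis using t t0 by simp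
  qed
  have wN: "w \<in> N" unfolding w_def by (rule subgroup_nat_pow[OF Nsub u0(1)])
  have wc: "w \<in> carrier G" using Ncar wN .
  have p1: "p \<noteq> 1" using p by auto
  define Np where "Np = {v \<in> N. v [^] p = \<one>}"
  have Np_normal: "Np \<lhd> G" unfolding normal_inv_iff
  proof (intro conjI ballI)
    show "subgroup Np G"
    proof (rule subgroupI)
      show "Np \<subseteq> carrier G" unfolding Np_def using Nc by blast
      show "Np \<noteq> {}" unfolding Np_def using one_N by auto
      fix a assume a: "a \<in> Np"
      hence aN: "a \<in> N" and ap: "a [^] p = \<one>" unfolding Np_def by auto
      have "inv a \<in> N" using subgroup.m_inv_closed[OF Nsub aN] .
      moreover have "(inv a) [^] p = \<one>" using nat_pow_inv[OF Ncar[OF aN]] ap by simp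
      ultimately show "inv a \<in> Np" unfolding Np_def by simp
    next
      fix a b assume "a \<in> Np" "b \<in> Np"
      hence aN: "a \<in> N" and ap: "a [^] p = \<one>" and bN: "b \<in> N" and bp: "b [^] p = \<one>"
        unfolding Np_def by auto
      have "a \<otimes> b \<in> N" using subgroup.m_closed[OF Nsub aN bN] .
      moreover have "(a \<otimes> b) [^] p = \<one>"
        using pow_mult_distrib[OF Nab[OF aN bN] Ncar[OF aN] Ncar[OF bN]] ap bp by simp
      ultimately show "a \<otimes> b \<in> Np" unfolding Np_def by simp
    qed
  next
    fix g v assume g: "g \<in> carrier G" and v: "v \<in> Np"
    hence vN: "v \<in> N" and vp: "v [^] p = \<one>" unfolding Np_def by auto
    have "g \<otimes> v \<otimes> inv g \<in> N" using normal.inv_op_closed2[OF N g vN] .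
    moreover have "(g \<otimes> v \<otimes> inv g) [^] p = \<one>" using conj_pow[OF g Ncar[OF vN]] vp g by simp
    ultimately show "g \<otimes> v \<otimes> inv g \<in> Np" unfolding Np_def by simp
  qed
  have "Np = N"
  proof (rule uniq'[OF Np_normal])
    show "Np \<subseteq> N" unfolding Np_def by blast
    have "w [^] p = \<one>" using pow_ord_eq_1[OF wc] ow by simp
    hence "w \<in> Np" unfolding Np_def using wN by simp
    moreover have "w \<noteq> \<one>" using ow p1 by auto
    ultimately show "Np \<noteq> {\<one>}" by blast
  qed
  hence pN: "ord u = p" if "u \<in> N" "u \<noteq> \<one>" for u
  proof -
    have "u [^] p = \<one>" using that \<open>Np = N\<close> unfolding Np_def by blast
    hence "ord u dvd p" using pow_eq_id[OF Ncar[OF that(1)]] by simp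
    moreover have "ord u \<noteq> 1" using ord_eq_1[OF Ncar[OF that(1)]] that(2) by simp
    ultimately show ?thesis using p unfolding prime_nat_iff by blast
  qed
  have pn: "p dvd n" unfolding n_def using ord_dvd_card_sub[OF fin Nsub wN] ow by simp
  define P where "P = 1 + p * (n - 1)"
  have sumN: "(\<Sum>x\<in>N. ord x) = P"
  proof -
    have "(\<Sum>x\<in>N. ord x) = ord \<one> + (\<Sum>x\<in>N - {\<one>}. ord x)" by (rule sum.remove[OF finN one_N])
    also have "(\<Sum>x\<in>N - {\<one>}. ord x) = (\<Sum>x\<in>N - {\<one>}. p)" by (rule sum.cong) (auto intro: pN)
    also have "\<dots> = (n - 1) * p" using finN one_N unfolding n_def by simp
    finally show ?thesis unfolding P_def by simp
  qed
  have psiN: "psi (G\<lparr>carrier := N\<rparr>) = P"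
  proof -
    have "psi (G\<lparr>carrier := N\<rparr>) = (\<Sum>x\<in>N. group.ord (G\<lparr>carrier := N\<rparr>) x)" unfolding psi_def by simp
    also have "\<dots> = (\<Sum>x\<in>N. ord x)" by (rule sum.cong) (auto intro: ord_consistent[OF Nsub])
    finally show ?thesis using sumN by simp
  qed
  have psiG: "psi G = P + (\<Sum>x\<in>carrier G - N. ord x)"
  proof -
    have "psi G = (\<Sum>x\<in>carrier G - N. ord x) + (\<Sum>x\<in>N. ord x)" unfolding psi_def
      by (rule sum.subset_diff[OF Nc fin])
    thus ?thesis using sumN by simp
  qed
  have cardGN: "card (carrier G - N) = card (carrier G) - n" unfolding n_def
    using card_Diff_subset[OF finN Nc] .
  have nG: "n dvd card (carrier G)" unfolding n_def
    using lagrange[OF Nsub] by (metis dvd_triv_right order_def)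
  have nlt: "n < card (carrier G)" unfolding n_def
    using psubset_card_mono[OF fin] Nc NG by blast
  obtain x0 where x0: "x0 \<in> carrier G" "x0 \<notin> N" using Nc NG by blast
  show ?thesis
  proof (cases "derived G (carrier G) = {\<one>}")
    case True
    have comm: "a \<otimes> b = b \<otimes> a" if "a \<in> carrier G" "b \<in> carrier G" for a b
    proof -
      have "a \<otimes> b \<otimes> inv a \<otimes> inv b = \<one>" using comm_of_D[of a "carrier G" b] True that by simp
      thus ?thesis using comm_of_commutator that by blast
    qed
    have outside: "ord z = card (carrier G)" if z: "z \<in> carrier G" "z \<notin> N" for z
    proof -
      have zs: "{z} \<subseteq> carrier G" using z by simp
      have X: "subgroup (generate G {z}) G" by (rule generate_is_subgroup[OF zs])
      have Xn: "generate G {z} \<lhd> G" unfolding normal_inv_iff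
      proof (intro conjI ballI X)
        fix g h assume g: "g \<in> carrier G" and h: "h \<in> generate G {z}"
        have hc: "h \<in> carrier G" by (rule subgroup.mem_carrier[OF X h])
        have "g \<otimes> h \<otimes> inv g = h" using comm[OF g hc] g hc by (simp add: m_assoc)
        thus "g \<otimes> h \<otimes> inv g \<in> generate G {z}" using h by simp
      qed
      have "z \<in> generate G {z}" by (rule generate.incl) simp
      hence "generate G {z} = carrier G" using uniqG[OF X Xn _ z(2)] by blast
      thus ?thesis using generate_pow_card[OF z(1)] by simp
    qed
    define m where "m = card (carrier G)"
    have om: "ord x0 = m" unfolding m_def using outside x0 by blast
    have mpos: "m > 0" using nlt unfolding m_def by simp
    have pm: "p dvd ord x0" using pn nG om unfolding m_def by (metis dvd_trans)
    have p0: "p \<noteq> 0" using p by auto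
    have xpN: "x0 [^] p \<in> N"
    proof (rule ccontr)
      assume "x0 [^] p \<notin> N"
      hence "ord (x0 [^] p) = m" using outside x0 unfolding m_def by simp
      moreover have "ord (x0 [^] p) = m div p" using ord_pow[OF x0(1) pm p0] om by simp
      moreover have "m div p < m" using mpos prime_gt_1_nat[OF p] by simp
      ultimately show False by simp
    qed
    have "(x0 [^] p) [^] p = \<one>"
    proof (cases "x0 [^] p = \<one>")
      case True thus ?thesis by simp
    next
      case False
      hence "ord (x0 [^] p) = p" using pN xpN by blast
      thus ?thesis using pow_ord_eq_1[of "x0 [^] p"] x0 by simp
    qed
    hence "x0 [^] (p * p) = \<one>" using nat_pow_pow[OF x0(1)] by simp
    hence mdvd: "m dvd p ^ 2" using pow_eq_id[OF x0(1)] om by (simp add: power2_eq_square)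
    obtain j where j: "j \<le> 2" "m = p ^ j" using mdvd divides_primepow_nat[OF p] by blast
    have "n dvd p ^ 2" using nG mdvd unfolding m_def by (metis dvd_trans)
    then obtain i where i: "i \<le> 2" "n = p ^ i" using divides_primepow_nat[OF p] by blast
    have "p ^ i < p ^ j" using nlt i j unfolding m_def by simp
    hence ij: "i < j" using prime_gt_1_nat[OF p] by (simp add: power_strict_increasing_iff)
    have "i \<noteq> 0"
    proof
      assume "i = 0"
      thus False using i n2 by simp
    qed
    hence i1: "i = 1" and j2: "j = 2" using ij i j by auto
    have nv: "n = p" using i i1 by simp
    have mv: "m = p * p" using j j2 by (simp add: power2_eq_square)
    have "(\<Sum>x\<in>carrier G - N. ord x) = (\<Sum>x\<in>carrier G - N. m)"
      by (rule sum.cong) (auto intro: outside simp: m_def)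
    also have "\<dots> = (m - n) * m" using cardGN unfolding m_def by simp
    finally have "psi G = P + (p * p - p) * (p * p)" using psiG mv nv by simp
    thus ?thesis using psiN arithA[OF p] unfolding P_def nv by simp
  next
    case False
    hence DN: "derived G (carrier G) = N" using D_cases by blast
    have B1: "H \<lhd> G" if H: "subgroup H G" "N \<subseteq> H" for H
      unfolding normal_inv_iff
    proof (intro conjI ballI H(1))
      fix g h assume g: "g \<in> carrier G" and h: "h \<in> H"
      have hc: "h \<in> carrier G" by (rule subgroup.mem_carrier[OF H(1) h])
      have "g \<otimes> h \<otimes> inv g \<otimes> inv h \<in> H" using comm_of_D[of g "carrier G" h] g hc DN H(2) by blast
      hence "(g \<otimes> h \<otimes> inv g \<otimes> inv h) \<otimes> h \<in> H" using subgroup.m_closed[OF H(1) _ h] by blast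
      moreover have "(g \<otimes> h \<otimes> inv g \<otimes> inv h) \<otimes> h = g \<otimes> h \<otimes> inv g" using g hc by (simp add: m_assoc)
      ultimately show "g \<otimes> h \<otimes> inv g \<in> H" by simp
    qed
    have B1': "H = carrier G" if "subgroup H G" "N \<subseteq> H" "z \<in> H" "z \<notin> N" for H z
      using uniqG[OF that(1) B1[OF that(1,2)] that(3,4)] .
    have B2: "\<not> (\<forall>a\<in>carrier G. \<forall>b\<in>carrier G. a \<otimes> b = b \<otimes> a)"
    proof
      assume "\<forall>a\<in>carrier G. \<forall>b\<in>carrier G. a \<otimes> b = b \<otimes> a"
      hence "comm_group G" by (intro group_comm_groupI) blast
      hence "derived G (carrier G) = {\<one>}" using comm_group.derived_eq_singleton by blast
      thus False using False by simp
    qed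
    have F: "u = \<one>" if x: "x \<in> carrier G" "x \<notin> N" and u: "u \<in> N" "u \<otimes> x = x \<otimes> u" for x u
    proof (rule ccontr)
      assume u1: "u \<noteq> \<one>"
      define Cx where "Cx = {g \<in> carrier G. g \<otimes> x = x \<otimes> g}"
      have Cxs: "subgroup Cx G" unfolding Cx_def by (rule cen_subgroup[OF x(1)])
      define C where "C = N \<inter> Cx"
      have Cs: "subgroup C G" unfolding C_def by (rule subgroups_Inter_pair[OF Nsub Cxs])
      have CN: "C \<subseteq> N" unfolding C_def by blast
      define Nm where "Nm = {g \<in> carrier G. \<forall>c\<in>C. g \<otimes> c \<otimes> inv g \<in> C}"
      have Nms: "subgroup Nm G"
      proof (rule finite_subgroupI[OF fin])
        show "Nm \<subseteq> carrier G" unfolding Nm_def by blast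
        show "\<one> \<in> Nm" unfolding Nm_def using Ncar CN by auto
        fix a b assume "a \<in> Nm" "b \<in> Nm"
        hence ac: "a \<in> carrier G" and ea: "\<And>c. c \<in> C \<Longrightarrow> a \<otimes> c \<otimes> inv a \<in> C"
          and bc: "b \<in> carrier G" and eb: "\<And>c. c \<in> C \<Longrightarrow> b \<otimes> c \<otimes> inv b \<in> C" unfolding Nm_def by auto
        have "a \<otimes> b \<otimes> c \<otimes> inv (a \<otimes> b) \<in> C" if c: "c \<in> C" for c
        proof -
          have cc: "c \<in> carrier G" using Ncar CN c by blast
          have "a \<otimes> b \<otimes> c \<otimes> inv (a \<otimes> b) = a \<otimes> (b \<otimes> c \<otimes> inv b) \<otimes> inv a"
            by (rule conj_mult2[OF ac bc cc])
          thus ?thesis using ea[OF eb[OF c]] by simp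
        qed
        thus "a \<otimes> b \<in> Nm" unfolding Nm_def using ac bc by simp
      qed
      have NNm: "N \<subseteq> Nm"
      proof
        fix g assume g: "g \<in> N"
        have "g \<otimes> c \<otimes> inv g \<in> C" if c: "c \<in> C" for c
        proof -
          have cN: "c \<in> N" using CN c by blast
          have "g \<otimes> c \<otimes> inv g = c \<otimes> g \<otimes> inv g" using Nab[OF g cN] by simp
          also have "\<dots> = c" using Ncar[OF g] Ncar[OF cN] by (simp add: m_assoc)
          finally show ?thesis using c by simp
        qed
        thus "g \<in> Nm" unfolding Nm_def using Ncar[OF g] by simp
      qed
      have xNm: "x \<in> Nm"
      proof -
        have "x \<otimes> c \<otimes> inv x \<in> C" if c: "c \<in> C" for c
        proof -
          have cc: "c \<otimes> x = x \<otimes> c" and ccar: "c \<in> carrier G" using c unfolding C_def Cx_def by auto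
          have "x \<otimes> c \<otimes> inv x = c \<otimes> x \<otimes> inv x" using cc by simp
          also have "\<dots> = c" using ccar x(1) by (simp add: m_assoc)
          finally show ?thesis using c by simp
        qed
        thus ?thesis unfolding Nm_def using x(1) by simp
      qed
      have "Nm = carrier G" by (rule B1'[OF Nms NNm xNm x(2)])
      hence Cn: "C \<lhd> G" unfolding normal_inv_iff using Cs unfolding Nm_def by blast
      have "u \<in> C" unfolding C_def Cx_def using u Ncar[OF u(1)] by simp
      hence "C \<noteq> {\<one>}" using u1 by blast
      hence "C = N" using uniq'[OF Cn CN] by blast
      hence NCx: "N \<subseteq> Cx" unfolding C_def by blast
      have "x \<in> Cx" unfolding Cx_def using x(1) by simp
      hence CxG: "Cx = carrier G" by (rule B1'[OF Cxs NCx _ x(2)])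
      define Z where "Z = {z \<in> carrier G. \<forall>g\<in>carrier G. z \<otimes> g = g \<otimes> z}"
      have Zn: "Z \<lhd> G" unfolding Z_def by (rule center_normal)
      have "\<forall>g\<in>carrier G. x \<otimes> g = g \<otimes> x"
      proof
        fix g assume "g \<in> carrier G"
        hence "g \<in> Cx" using CxG by simp
        thus "x \<otimes> g = g \<otimes> x" unfolding Cx_def by simp
      qed
      hence xZ: "x \<in> Z" unfolding Z_def using x(1) by simp
      have "Z \<noteq> {\<one>}" using xZ x(2) one_N by blast
      moreover have "Z \<noteq> carrier G" using B2 unfolding Z_def by blast
      ultimately have "Z = N" using uniq[OF Zn] by blast
      thus False using xZ x(2) by blast
    qed
    have FX: "x [^] k = \<one>" if x: "x \<in> carrier G" "x \<notin> N" and k: "x [^] (k::nat) \<in> N" for x k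
    proof (rule F[OF x k])
      show "x [^] k \<otimes> x = x \<otimes> x [^] k" using x(1) by (metis nat_pow_Suc nat_pow_Suc2)
    qed
    have B4: "n * ord x = card (carrier G)" if x: "x \<in> carrier G" "x \<notin> N" for x
    proof -
      define K where "K = {u \<otimes> x [^] (k::nat) | u k. u \<in> N}"
      have Ks: "subgroup K G"
      proof (rule finite_subgroupI[OF fin])
        show "K \<subseteq> carrier G" unfolding K_def using Ncar x(1) by blast
        have "\<one> = \<one> \<otimes> x [^] (0::nat)" by simp
        thus "\<one> \<in> K" unfolding K_def using one_N by blast
        fix a b assume "a \<in> K" "b \<in> K"
        then obtain u i v j where a: "a = u \<otimes> x [^] (i::nat)" "u \<in> N" and b: "b = v \<otimes> x [^] (j::nat)" "v \<in> N"
          unfolding K_def by blast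
        have xi: "x [^] i \<in> carrier G" using x(1) by simp
        have "a \<otimes> b = (u \<otimes> (x [^] i \<otimes> v \<otimes> inv (x [^] i))) \<otimes> (x [^] i \<otimes> x [^] j)"
          unfolding a b by (rule mid_conj[OF Ncar[OF a(2)] xi Ncar[OF b(2)]]) (use x(1) in simp)
        also have "\<dots> = (u \<otimes> (x [^] i \<otimes> v \<otimes> inv (x [^] i))) \<otimes> x [^] (i + j)"
          using x(1) by (simp add: nat_pow_mult)
        finally have ab: "a \<otimes> b = (u \<otimes> (x [^] i \<otimes> v \<otimes> inv (x [^] i))) \<otimes> x [^] (i + j)" .
        have "u \<otimes> (x [^] i \<otimes> v \<otimes> inv (x [^] i)) \<in> N"
          using subgroup.m_closed[OF Nsub a(2) normal.inv_op_closed2[OF N xi b(2)]] .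
        thus "a \<otimes> b \<in> K" unfolding K_def ab by blast
      qed
      have NK: "N \<subseteq> K"
      proof
        fix u assume u: "u \<in> N"
        have "u = u \<otimes> x [^] (0::nat)" using Ncar[OF u] by simp
        thus "u \<in> K" unfolding K_def using u by blast
      qed
      have xK: "x \<in> K"
      proof -
        have "x = \<one> \<otimes> x [^] (1::nat)" using x(1) by simp
        thus ?thesis unfolding K_def using one_N by blast
      qed
      have KG: "K = carrier G" by (rule B1'[OF Ks NK xK x(2)])
      have opos: "ord x > 0" using ord_ge_1[OF fin x(1)] by simp
      define f where "f = (\<lambda>(u, k::nat). u \<otimes> x [^] k)"
      have img: "f ` (N \<times> {..<ord x}) = K"
      proof
        show "f ` (N \<times> {..<ord x}) \<subseteq> K"
        proof
          fix a assume "a \<in> f ` (N \<times> {..<ord x})"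
          then obtain u k where "a = u \<otimes> x [^] (k::nat)" "u \<in> N" unfolding f_def by auto
          thus "a \<in> K" unfolding K_def by blast
        qed
        show "K \<subseteq> f ` (N \<times> {..<ord x})"
        proof
          fix a assume "a \<in> K"
          then obtain u k where a: "a = u \<otimes> x [^] (k::nat)" "u \<in> N" unfolding K_def by blast
          have "a = f (u, k mod ord x)" unfolding f_def a using pow_mod_ord[OF x(1), of k] by simp
          moreover have "(u, k mod ord x) \<in> N \<times> {..<ord x}" using a(2) opos by simp
          ultimately show "a \<in> f ` (N \<times> {..<ord x})" by blast
        qed
      qed
      have aux: "i = j \<and> u = v" if "u \<in> N" "v \<in> N" "i \<le> j" "j < ord x"
        "u \<otimes> x [^] (i::nat) = v \<otimes> x [^] (j::nat)" for u v i j
      proof -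
        have uc: "u \<in> carrier G" and vc: "v \<in> carrier G" using Ncar that by auto
        have "x [^] j = x [^] (j - i) \<otimes> x [^] i" using x(1) that(3) by (simp add: nat_pow_mult)
        hence "u \<otimes> x [^] i = (v \<otimes> x [^] (j - i)) \<otimes> x [^] i" using that(5) uc vc x(1) by (simp add: m_assoc)
        hence e: "u = v \<otimes> x [^] (j - i)" using uc vc x(1) by simp
        hence "x [^] (j - i) = inv v \<otimes> u" using uc vc x(1) by (simp add: m_assoc[symmetric])
        moreover have "inv v \<otimes> u \<in> N" using subgroup.m_closed[OF Nsub subgroup.m_inv_closed[OF Nsub that(2)] that(1)] .
        ultimately have "x [^] (j - i) \<in> N" by simp
        hence "x [^] (j - i) = \<one>" using FX[OF x] by blast
        hence "ord x dvd j - i" using pow_eq_id[OF x(1)] by simp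
        hence "j - i = 0" using that(4) by (metis dvd_imp_le le_less_trans diff_le_self not_less neq0_conv)
        hence "i = j" using that(3) by simp
        thus ?thesis using e vc by simp
      qed
      have inj: "inj_on f (N \<times> {..<ord x})"
      proof (rule inj_onI)
        fix a b assume "a \<in> N \<times> {..<ord x}" "b \<in> N \<times> {..<ord x}" "f a = f b"
        then obtain u i v j where ab: "a = (u, i)" "b = (v, j)" "u \<in> N" "v \<in> N" "i < ord x" "j < ord x"
          "u \<otimes> x [^] i = v \<otimes> x [^] j" unfolding f_def by auto
        show "a = b"
        proof (cases "i \<le> j")
          case True thus ?thesis using aux[OF ab(3,4) True ab(6,7)] ab by simp
        next
          case False thus ?thesis using aux[OF ab(4,3) _ ab(5) ab(7)[symmetric]] ab by simp
        qed
      qed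
      have "card (carrier G) = card (N \<times> {..<ord x})" using card_image[OF inj] img KG by simp
      thus ?thesis unfolding n_def by (simp add: card_cartesian_product)
    qed
    define q where "q = ord x0"
    have npos: "n > 0" using n2 by simp
    have allq: "ord z = q" if "z \<in> carrier G" "z \<notin> N" for z
    proof -
      have "n * ord z = n * ord x0" using B4[OF that] B4[OF x0] by argo
      thus ?thesis using npos unfolding q_def by simp
    qed
    have q1: "q \<ge> 1" unfolding q_def using ord_ge_1[OF fin x0(1)] .
    have "q \<noteq> 1" unfolding q_def using ord_eq_1[OF x0(1)] x0 one_N by auto
    hence q2: "q \<ge> 2" using q1 by simp
    have qd: "q dvd n - 1"
    proof -
      have "q dvd card (N - {\<one>})"
      proof (rule orbit_dvd[OF N fin x0(1)])
        show "x0 [^] q = \<one>" unfolding q_def using x0(1) by simp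
        show "q > 0" using q1 by simp
        fix i u assume i: "0 < i" "i < q" and u: "u \<in> N" "u \<otimes> x0 [^] i = x0 [^] i \<otimes> u"
        have xi: "x0 [^] i \<notin> N"
        proof
          assume "x0 [^] i \<in> N"
          hence "x0 [^] i = \<one>" using FX[OF x0] by blast
          hence "q dvd i" unfolding q_def using pow_eq_id[OF x0(1)] by simp
          thus False using i by (simp add: nat_dvd_not_less)
        qed
        show "u = \<one>" by (rule F[OF _ xi u]) (use x0(1) in simp)
      qed
      thus ?thesis using finN one_N unfolding n_def by simp
    qed
    have cop: "coprime P n"
    proof (rule coprimeI)
      fix c assume c: "c dvd P" "c dvd n"
      show "is_unit c"
      proof (rule ccontr)
        assume "\<not> is_unit c"
        hence "c \<noteq> 1" by auto
        then obtain r where r: "prime r" "r dvd c" using prime_factor_nat by blast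
        have rn: "r dvd card N" using r c unfolding n_def by (metis dvd_trans)
        obtain h where h: "h \<in> N" "ord h = r" using cauchy_sub[OF fin Nsub r(1) rn] by blast
        have "h \<noteq> \<one>" using h r(1) by auto
        hence "r = p" using pN h by simp
        hence "p dvd P" using r c by (metis dvd_trans)
        hence "p dvd 1 + p * (n - 1)" unfolding P_def .
        hence "p dvd 1" by (rule dvd_add_left_iff[OF dvd_triv_left, THEN iffD1])
        thus False using p by simp
      qed
    qed
    have "(\<Sum>x\<in>carrier G - N. ord x) = (\<Sum>x\<in>carrier G - N. q)"
      by (rule sum.cong) (auto intro: allq)
    also have "\<dots> = (n * q - n) * q" using cardGN B4[OF x0] unfolding q_def by simp
    finally have "psi G = P + (n * q - n) * q" using psiG by simp
    thus ?thesis using psiN arithB[OF p n2 q2 qd] cop unfolding P_def by simp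
  qed
qed

end

theorem proposition3p2:
  fixes G :: "('a, 'b) monoid_scheme"
  assumes "group G"
    and "finite (carrier G)"
    and "solvable G"
    and "\<exists>!N. N \<lhd> G \<and> N \<noteq> {\<one>\<^bsub>G\<^esub>} \<and> N \<noteq> carrier G"
  shows "\<not> psi_normal_divisible G"
proof
  assume nd: "psi_normal_divisible G"
  from assms(4) obtain N where N: "N \<lhd> G \<and> N \<noteq> {\<one>\<^bsub>G\<^esub>} \<and> N \<noteq> carrier G"
    and u: "\<And>K. K \<lhd> G \<and> K \<noteq> {\<one>\<^bsub>G\<^esub>} \<and> K \<noteq> carrier G \<Longrightarrow> K = N"
    by (rule ex1E) blast
  have "psi (G\<lparr>carrier := N\<rparr>) dvd psi G" using nd N unfolding psi_normal_divisible_def by blast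
  moreover have "\<not> psi (G\<lparr>carrier := N\<rparr>) dvd psi G"
  proof (rule group.main[OF assms(1,2,3)])
    show "N \<lhd> G" "N \<noteq> {\<one>\<^bsub>G\<^esub>}" "N \<noteq> carrier G" using N by auto
    fix K assume "K \<lhd> G" "K \<noteq> {\<one>\<^bsub>G\<^esub>}" "K \<noteq> carrier G"
    thus "K = N" using u by blast
  qed
  ultimately show False by contradiction
qed
end
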